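(* Let $\mathcal{G}=(\mathcal{V},E)$ be an undirected graph with $\mathcal{V}=\{1,\dots,N\}$ and set of cliques $\mathcal{C}$. For each $i$ let $\mathcal{X}_i$ be a finite alphabet and $g_i:\mathcal{X}_i\to\mathcal{Y}_i$ a function, and let $g=(g_1,\dots,g_N)$ act coordinatewise on $\mathcal{X}=\prod_i\mathcal{X}_i$. Let $X$ be a random variable on $\mathcal{X}$ with $p_X(x)>0$ for all $x$ and $p_X(x)=\frac{1}{Z}\prod_{C\in\mathcal{C}}\psi_C(x)$, $Z=\sum_{x}\prod_{C}\psi_C(x)$, for a family of potentials $\{\psi_C,\ C\in\mathcal{C}\}$. Assume that for every $C\in\mathcal{C}$ and every $y$, $\psi_C(x)=\psi_C(x')$ for all $x,x'\in g^{-1}(y)$. Let $Y=g(X)$. Then for every choice of map $C':\mathcal{V}\to\mathcal{C}$ with $i\in C'(i)$ for all $i$, letting $\mathcal{V}_1,\dots,\mathcal{V}_L$ be the classes of vertices with equal $C'(i)$ and $C'(\mathcal{V}_\ell)$ the common clique, $Y$ is a Markov random field on $\mathcal{G}$ with $p_Y(y)=\frac1Z\prod_{C\in\mathcal{C}}U_C(y)$, where $$U_{C'(\mathcal{V}_\ell)}(g(x))=\big|g_{\mathcal{V}_\ell}^{-1}(g_{\mathcal{V}_\ell}(x_{\mathcal{V}_\ell}))\big|\cdot\psi_{C'(\mathcal{V}_\ell)}(x),\quad \ell=1,\dots,L,$$ and $U_C(g(x))=\psi_C(x)$ for all other cliques $C$.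
   Context: A clique is a singleton or a set of pairwise adjacent vertices. For $A\subseteq\mathcal{V}$, $x_A=(x_i,i\in A)$ and $g_A(x_A)=(g_i(x_i),i\in A)$; $g_A^{-1}(\cdot)$ denotes the preimage in $\prod_{i\in A}\mathcal{X}_i$. A potential $\psi_C$ on $\prod_{i\in C}\mathcal{X}_i$ is regarded as a function on $\mathcal{X}$ via $\psi_C(x)=\psi_C(x_C)$. $X$ (resp. $Y$) is a Markov random field on $\mathcal{G}$ if for every $i$ the conditional law of its $i$-th coordinate given all other coordinates equals that given the coordinates at the neighbors $\mathcal{N}_i$ of $i$. *)

theory Defs
  imports Complex_Main "HOL-Library.FuncSet"
begin

definition is_clique :: "'v set \<Rightarrow> ('v \<Rightarrow> 'v \<Rightarrow> bool) \<Rightarrow> 'v set \<Rightarrow> bool" where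
  "is_clique V E C \<longleftrightarrow> C \<subseteq> V \<and> C \<noteq> {} \<and> (\<forall>a\<in>C. \<forall>b\<in>C. a \<noteq> b \<longrightarrow> E a b)"

definition cliques :: "'v set \<Rightarrow> ('v \<Rightarrow> 'v \<Rightarrow> bool) \<Rightarrow> 'v set set" where
  "cliques V E = {C. is_clique V E C}"

definition nbrs :: "'v set \<Rightarrow> ('v \<Rightarrow> 'v \<Rightarrow> bool) \<Rightarrow> 'v \<Rightarrow> 'v set" where
  "nbrs V E i = {j\<in>V. E i j}"

definition gmap :: "'v set \<Rightarrow> ('v \<Rightarrow> 'a \<Rightarrow> 'b) \<Rightarrow> ('v \<Rightarrow> 'a) \<Rightarrow> ('v \<Rightarrow> 'b)" where
  "gmap V g x = restrict (\<lambda>i. g i (x i)) V"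

definition gibbs_weight :: "'v set \<Rightarrow> ('v \<Rightarrow> 'v \<Rightarrow> bool) \<Rightarrow> ('v set \<Rightarrow> ('v \<Rightarrow> 'a) \<Rightarrow> real) \<Rightarrow> ('v \<Rightarrow> 'a) \<Rightarrow> real" where
  "gibbs_weight V E \<psi> x = (\<Prod>C\<in>cliques V E. \<psi> C (restrict x C))"

definition partition_fn :: "'v set \<Rightarrow> ('v \<Rightarrow> 'v \<Rightarrow> bool) \<Rightarrow> ('v \<Rightarrow> 'a set) \<Rightarrow> ('v set \<Rightarrow> ('v \<Rightarrow> 'a) \<Rightarrow> real) \<Rightarrow> real" where
  "partition_fn V E X \<psi> = (\<Sum>x\<in>PiE V X. gibbs_weight V E \<psi> x)"

definition gibbs_pmf :: "'v set \<Rightarrow> ('v \<Rightarrow> 'v \<Rightarrow> bool) \<Rightarrow> ('v \<Rightarrow> 'a set) \<Rightarrow> ('v set \<Rightarrow> ('v \<Rightarrow> 'a) \<Rightarrow> real) \<Rightarrow> ('v \<Rightarrow> 'a) \<Rightarrow> real" where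
  "gibbs_pmf V E X \<psi> x = gibbs_weight V E \<psi> x / partition_fn V E X \<psi>"

definition pushforward :: "'v set \<Rightarrow> ('v \<Rightarrow> 'a set) \<Rightarrow> ('v \<Rightarrow> 'a \<Rightarrow> 'b) \<Rightarrow> (('v \<Rightarrow> 'a) \<Rightarrow> real) \<Rightarrow> ('v \<Rightarrow> 'b) \<Rightarrow> real" where
  "pushforward V X g p y = (\<Sum>x\<in>{x\<in>PiE V X. gmap V g x = y}. p x)"

definition marg :: "(('v \<Rightarrow> 'b) \<Rightarrow> real) \<Rightarrow> ('v \<Rightarrow> 'b) set \<Rightarrow> 'v set \<Rightarrow> ('v \<Rightarrow> 'b) \<Rightarrow> real" where
  "marg p S A z = (\<Sum>y\<in>{y\<in>S. restrict y A = z}. p y)"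

definition cond_prob :: "(('v \<Rightarrow> 'b) \<Rightarrow> real) \<Rightarrow> ('v \<Rightarrow> 'b) set \<Rightarrow> 'v \<Rightarrow> 'v set \<Rightarrow> ('v \<Rightarrow> 'b) \<Rightarrow> real" where
  "cond_prob p S i A y = marg p S (insert i A) (restrict y (insert i A)) / marg p S A (restrict y A)"

definition markov_rf :: "'v set \<Rightarrow> ('v \<Rightarrow> 'v \<Rightarrow> bool) \<Rightarrow> ('v \<Rightarrow> 'b set) \<Rightarrow> (('v \<Rightarrow> 'b) \<Rightarrow> real) \<Rightarrow> bool" where
  "markov_rf V E Y p \<longleftrightarrow>
     (\<forall>i\<in>V. \<forall>y\<in>PiE V Y. marg p (PiE V Y) (V - {i}) (restrict y (V - {i})) > 0 \<longrightarrow>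
        cond_prob p (PiE V Y) i (V - {i}) y = cond_prob p (PiE V Y) i (nbrs V E i) y)"

end

theory Submission imports Defs begin

lemma restrict_eqD: "restrict f A = restrict g A \<Longrightarrow> j \<in> A \<Longrightarrow> f j = g j"
  by (metis restrict_apply')

lemma restrict_eq_iff: "restrict f A = restrict g A \<longleftrightarrow> (\<forall>j\<in>A. f j = g j)"
  by (auto simp: restrict_def fun_eq_iff)

lemma markov_local:
  fixes p a b :: "('v \<Rightarrow> 'b) \<Rightarrow> real"
  assumes S: "S = PiE V Y" and finV: "finite V" and finY: "\<forall>j\<in>V. finite (Y j)"
    and iV: "i \<in> V" and NV: "N \<subseteq> V - {i}"
    and fact: "\<forall>y\<in>S. p y = a y * b y"
    and a_dep: "\<forall>y\<in>S. \<forall>y'\<in>S. (\<forall>j\<in>insert i N. y j = y' j) \<longrightarrow> a y = a y'"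
    and b_dep: "\<forall>y\<in>S. \<forall>y'\<in>S. (\<forall>j\<in>V-{i}. y j = y' j) \<longrightarrow> b y = b y'"
    and ppos: "\<forall>y\<in>S. p y > 0"
    and yS: "y \<in> S"
  shows "cond_prob p S i (V-{i}) y = cond_prob p S i N y"
proof -
  have finS: "finite S" using S finV finY by (simp add: finite_PiE)
  have upd: "y'(i:=t) \<in> S" if "y' \<in> S" "t \<in> Y i" for y' t
    using that iV S by (auto simp: PiE_def extensional_def Pi_def)
  have ins: "insert i (V - {i}) = V" using iV by auto
  have m1: "marg p S V (restrict y V) = p y"
  proof -
    have "{y'\<in>S. restrict y' V = restrict y V} = {y}"
      using yS S by auto
    then show ?thesis by (simp add: marg_def)
  qed
  define Sg where "Sg = (\<Sum>t\<in>Y i. a (y(i:=t)))"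
  have m2: "marg p S (V-{i}) (restrict y (V-{i})) = b y * Sg"
  proof -
    have eq: "{y'\<in>S. restrict y' (V-{i}) = restrict y (V-{i})} = (\<lambda>t. y(i:=t)) ` Y i"
    proof (rule set_eqI, rule iffI)
      fix y' assume h: "y' \<in> {y'\<in>S. restrict y' (V-{i}) = restrict y (V-{i})}"
      have "y' = y(i := y' i)"
      proof
        fix j show "y' j = (y(i := y' i)) j"
        proof (cases "j \<in> V - {i}")
          case True then show ?thesis using h restrict_eqD[of y' "V-{i}" y j] by auto
        next
          case False
          show ?thesis
          proof (cases "j = i")
            case True then show ?thesis by simp
          next
            case False
            then have "j \<notin> V" using \<open>j \<notin> V - {i}\<close> by blast
            moreover have "y' \<in> S" using h by blast
            ultimately have "y' j = undefined" "y j = undefined" using yS S PiE_arb by metis+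
            then show ?thesis using False by simp
          qed
        qed
      qed
      moreover have "y' i \<in> Y i" using h S iV by auto
      ultimately show "y' \<in> (\<lambda>t. y(i:=t)) ` Y i" by blast
    next
      fix y' assume "y' \<in> (\<lambda>t. y(i:=t)) ` Y i"
      then obtain t where t: "t \<in> Y i" and y': "y' = y(i:=t)" by blast
      show "y' \<in> {y'\<in>S. restrict y' (V-{i}) = restrict y (V-{i})}"
        unfolding y' using upd[OF yS t] by (auto simp: restrict_def fun_eq_iff)
    qed
    have inj: "inj_on (\<lambda>t. y(i:=t)) (Y i)" by (auto simp: inj_on_def fun_eq_iff)
    have "marg p S (V-{i}) (restrict y (V-{i})) = (\<Sum>t\<in>Y i. p (y(i:=t)))"
      unfolding marg_def eq by (simp add: sum.reindex[OF inj])
    also have "\<dots> = (\<Sum>t\<in>Y i. a (y(i:=t)) * b y)"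
    proof (rule sum.cong[OF refl])
      fix t assume t: "t \<in> Y i"
      have "\<forall>j\<in>V-{i}. (y(i:=t)) j = y j" by simp
      then have "b (y(i:=t)) = b y" using b_dep upd[OF yS t] yS by blast
      then show "p (y(i:=t)) = a (y(i:=t)) * b y" using fact upd[OF yS t] by auto
    qed
    also have "\<dots> = b y * Sg" by (simp add: Sg_def sum_distrib_left mult.commute)
    finally show ?thesis .
  qed
  define T' where "T' = {y'\<in>S. restrict y' (insert i N) = restrict y (insert i N)}"
  define B where "B = (\<Sum>y'\<in>T'. b y')"
  have yT': "y \<in> T'" using yS by (simp add: T'_def)
  have finT': "finite T'" using finS by (simp add: T'_def)
  have aT': "a y' = a y" if "y' \<in> T'" for y'
  proof -
    have "y' \<in> S" "\<forall>j\<in>insert i N. y' j = y j" using that unfolding T'_def restrict_eq_iff by auto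
    then show ?thesis using a_dep yS by blast
  qed
  have m3: "marg p S (insert i N) (restrict y (insert i N)) = a y * B"
    unfolding marg_def B_def sum_distrib_left T'_def[symmetric]
    by (rule sum.cong[OF refl]) (use fact aT' T'_def in auto)
  have m4: "marg p S N (restrict y N) = Sg * B"
  proof -
    define T where "T = {y'\<in>S. restrict y' N = restrict y N}"
    have finT: "finite T" using finS by (simp add: T_def)
    have "marg p S N (restrict y N) = (\<Sum>y'\<in>T. p y')" by (simp add: marg_def T_def)
    also have "\<dots> = (\<Sum>t\<in>Y i. \<Sum>y'\<in>{y'. y'\<in>T \<and> y' i = t}. p y')"
      by (rule sum.group[symmetric, OF finT]) (use finY iV S T_def in auto)
    also have "\<dots> = (\<Sum>t\<in>Y i. a (y(i:=t)) * B)"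
    proof (rule sum.cong[OF refl])
      fix t assume t: "t \<in> Y i"
      have bij: "bij_betw (\<lambda>y'. y'(i:=t)) T' {y'. y'\<in>T \<and> y' i = t}"
      proof (rule bij_betw_byWitness[where f'="\<lambda>y'. y'(i:= y i)"])
        show "\<forall>a\<in>T'. a(i := t, i := y i) = a"
        proof
          fix a assume "a \<in> T'"
          then have "a i = y i" unfolding T'_def restrict_eq_iff by auto
          then show "a(i := t, i := y i) = a" by auto
        qed
        show "\<forall>a\<in>{y'. y'\<in>T \<and> y' i = t}. a(i := y i, i := t) = a" by auto
        show "(\<lambda>y'. y'(i:=t)) ` T' \<subseteq> {y'. y'\<in>T \<and> y' i = t}"
        proof (rule image_subsetI)
          fix a assume "a \<in> T'"
          then have "a \<in> S" "\<forall>j\<in>N. a j = y j" unfolding T'_def restrict_eq_iff by auto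
          moreover have "i \<notin> N" using NV by auto
          ultimately show "a(i:=t) \<in> {y'. y'\<in>T \<and> y' i = t}" unfolding T_def restrict_eq_iff using upd[OF _ t] by auto
        qed
        show "(\<lambda>y'. y'(i:= y i)) ` {y'. y'\<in>T \<and> y' i = t} \<subseteq> T'"
        proof (rule image_subsetI)
          fix a assume "a \<in> {y'. y'\<in>T \<and> y' i = t}"
          then have "a \<in> T" by blast
          then have "a \<in> S" "\<forall>j\<in>N. a j = y j" unfolding T_def restrict_eq_iff by auto
          moreover have "y i \<in> Y i" using yS S iV by auto
          ultimately show "a(i:=y i) \<in> T'" unfolding T'_def restrict_eq_iff using upd by auto
        qed
      qed
      have "(\<Sum>y'\<in>{y'. y'\<in>T \<and> y' i = t}. p y') = (\<Sum>y'\<in>T'. p (y'(i:=t)))"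
        using sum.reindex_bij_betw[OF bij, of p] by simp
      also have "\<dots> = (\<Sum>y'\<in>T'. a (y(i:=t)) * b y')"
      proof (rule sum.cong[OF refl])
        fix y' assume y': "y' \<in> T'"
        have y'S: "y' \<in> S" using y' T'_def by auto
        have "a (y'(i:=t)) = a (y(i:=t))"
        proof -
          have "\<forall>j\<in>insert i N. (y'(i:=t)) j = (y(i:=t)) j" using y' unfolding T'_def restrict_eq_iff by auto
          then show ?thesis using a_dep upd[OF y'S t] upd[OF yS t] by blast
        qed
        moreover have "\<forall>j\<in>V-{i}. (y'(i:=t)) j = y' j" by simp
        moreover have "b (y'(i:=t)) = b y'" using b_dep upd[OF y'S t] y'S calculation(2) by blast
        ultimately show "p (y'(i:=t)) = a (y(i:=t)) * b y'" using fact upd[OF y'S t] by auto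
      qed
      finally show "(\<Sum>y'\<in>{y'. y'\<in>T \<and> y' i = t}. p y') = a (y(i:=t)) * B"
        by (simp add: B_def sum_distrib_left)
    qed
    finally show ?thesis by (simp add: Sg_def sum_distrib_right)
  qed
  have m3pos: "a y * B > 0"
  proof -
    have "marg p S (insert i N) (restrict y (insert i N)) > 0"
      unfolding marg_def T'_def[symmetric] using finT' yT' ppos T'_def
      by (intro sum_pos) auto
    then show ?thesis using m3 by simp
  qed
  have "p y > 0" using ppos yS by auto
  moreover have "p y = a y * b y" using fact yS by blast
  ultimately have "b y \<noteq> 0" "a y \<noteq> 0" by auto
  moreover have "B \<noteq> 0" using m3pos by auto
  ultimately show ?thesis
    unfolding cond_prob_def ins m1 m2 m3 m4 using \<open>p y = a y * b y\<close> by (simp add: field_simps)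
qed


lemma PiE_filter: "{z\<in>PiE W X. \<forall>j\<in>W. P j (z j)} = PiE W (\<lambda>j. {a\<in>X j. P j a})"
  by (auto simp: PiE_iff extensional_def)

lemma gmap_eq_iff: "gmap V g x = gmap V g x' \<longleftrightarrow> (\<forall>j\<in>V. g j (x j) = g j (x' j))"
  unfolding gmap_def restrict_eq_iff by simp

lemma cliques_sub: "C \<in> cliques V E \<Longrightarrow> C \<subseteq> V"
  by (simp add: cliques_def is_clique_def)

lemma finite_cliques: "finite V \<Longrightarrow> finite (cliques V E)"
  by (rule finite_subset[of _ "Pow V"]) (auto simp: cliques_def is_clique_def)

theorem corollary1:
  fixes N :: nat and E :: "nat \<Rightarrow> nat \<Rightarrow> bool"
    and X :: "nat \<Rightarrow> 'a set" and g :: "nat \<Rightarrow> 'a \<Rightarrow> 'b"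
    and \<psi> :: "nat set \<Rightarrow> (nat \<Rightarrow> 'a) \<Rightarrow> real"
    and C' :: "nat \<Rightarrow> nat set"
  assumes sym: "\<forall>i j. E i j \<longrightarrow> E j i"
    and irrefl: "\<forall>i. \<not> E i i"
    and fin: "\<forall>i\<in>{1..N}. finite (X i)"
    and pos: "\<forall>x\<in>PiE {1..N} X. gibbs_pmf {1..N} E X \<psi> x > 0"
    and inv: "\<forall>C\<in>cliques {1..N} E. \<forall>x\<in>PiE {1..N} X. \<forall>x'\<in>PiE {1..N} X.
                gmap {1..N} g x = gmap {1..N} g x' \<longrightarrow> \<psi> C (restrict x C) = \<psi> C (restrict x' C)"
    and C'_clique: "\<forall>i\<in>{1..N}. C' i \<in> cliques {1..N} E \<and> i \<in> C' i"
  shows "markov_rf {1..N} E (\<lambda>i. g i ` X i)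
           (pushforward {1..N} X g (gibbs_pmf {1..N} E X \<psi>))
       \<and> (\<exists>U :: nat set \<Rightarrow> (nat \<Rightarrow> 'b) \<Rightarrow> real.
            \<forall>x\<in>PiE {1..N} X.
              pushforward {1..N} X g (gibbs_pmf {1..N} E X \<psi>) (gmap {1..N} g x)
                = (\<Prod>C\<in>cliques {1..N} E. U C (restrict (gmap {1..N} g x) C))
                  / partition_fn {1..N} E X \<psi>
            \<and> (\<forall>C\<in>C' ` {1..N}.
                 U C (restrict (gmap {1..N} g x) C)
                   = real (card {z\<in>PiE {j\<in>{1..N}. C' j = C} X.
                                  \<forall>j\<in>{j\<in>{1..N}. C' j = C}. g j (z j) = g j (x j)})
                     * \<psi> C (restrict x C))
            \<and> (\<forall>C\<in>cliques {1..N} E - C' ` {1..N}.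
                 U C (restrict (gmap {1..N} g x) C) = \<psi> C (restrict x C)))"

proof -
  define V where "V = {1..N}"
  define Yg where "Yg = (\<lambda>i. g i ` X i)"
  define cl where "cl = cliques V E"
  define w where "w = gibbs_weight V E \<psi>"
  define Z where "Z = partition_fn V E X \<psi>"
  define pX where "pX = gibbs_pmf V E X \<psi>"
  define pY where "pY = pushforward V X g pX"
  define cnt where "cnt = (\<lambda>j b. card {a\<in>X j. g j a = b})"
  define sel where "sel = (\<lambda>j b. SOME a. a \<in> X j \<and> g j a = b)"
  define U where "U = (\<lambda>C y. (if C \<in> C' ` V then \<Prod>j\<in>{j\<in>V. C' j = C}. real (cnt j (y j)) else 1)
                               * \<psi> C (\<lambda>j\<in>C. sel j (y j)))"
  have finV: "finite V" by (simp add: V_def)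
  have inv': "\<And>C x x'. C \<in> cl \<Longrightarrow> x \<in> PiE V X \<Longrightarrow> x' \<in> PiE V X \<Longrightarrow> gmap V g x = gmap V g x'
       \<Longrightarrow> \<psi> C (restrict x C) = \<psi> C (restrict x' C)"
    using inv unfolding V_def cl_def by blast
  have pos': "\<And>x. x \<in> PiE V X \<Longrightarrow> pX x > 0" using pos unfolding V_def pX_def by blast
  have C'cl: "\<And>i. i \<in> V \<Longrightarrow> C' i \<in> cl" and C'in: "\<And>i. i \<in> V \<Longrightarrow> i \<in> C' i"
    using C'_clique unfolding V_def cl_def by blast+
  have fincl: "finite cl" unfolding cl_def using finV by (rule finite_cliques)
  have finX: "\<forall>j\<in>V. finite (X j)" using fin V_def by simp
  have sel: "sel j (g j a) \<in> X j \<and> g j (sel j (g j a)) = g j a" if "a \<in> X j" for j a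
    unfolding sel_def by (rule someI[of _ a]) (use that in simp)
  have pXw: "pX x = w x / Z" for x by (simp add: pX_def w_def Z_def gibbs_pmf_def)
  have wconst: "w x = w x'" if x: "x \<in> PiE V X" and x': "x' \<in> PiE V X"
      and gx: "gmap V g x = gmap V g x'" for x x'
    unfolding w_def gibbs_weight_def
    by (rule prod.cong[OF refl]) (rule inv'[OF _ x x' gx], simp add: cl_def)
  define fib where "fib = (\<lambda>x. {x'\<in>PiE V X. gmap V g x' = gmap V g x})"
  have fib_eq: "fib x = PiE V (\<lambda>j. {a\<in>X j. g j a = g j (x j)})" for x
    unfolding fib_def gmap_eq_iff by (rule PiE_filter)
  have card_fib: "card (fib x) = (\<Prod>j\<in>V. cnt j (g j (x j)))" for x
    unfolding fib_eq cnt_def using finV by (simp add: card_PiE)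
  have finfib: "finite (fib x)" for x
    unfolding fib_eq using finV finX by (intro finite_PiE) auto
  have pY_x: "pY (gmap V g x) = real (card (fib x)) * (w x / Z)" if x: "x \<in> PiE V X" for x
  proof -
    have "pY (gmap V g x) = (\<Sum>x'\<in>fib x. w x' / Z)"
      by (simp add: pY_def pushforward_def fib_def pXw)
    also have "\<dots> = (\<Sum>x'\<in>fib x. w x / Z)"
    proof (rule sum.cong[OF refl])
      fix x' assume "x' \<in> fib x"
      then have "x' \<in> PiE V X" "gmap V g x' = gmap V g x" by (auto simp: fib_def)
      then show "w x' / Z = w x / Z" using wconst[OF _ x] by simp
    qed
    finally show ?thesis by simp
  qed
  have pY_pos: "pY (gmap V g x) > 0" if x: "x \<in> PiE V X" for x
  proof -
    have "x \<in> fib x" using x by (simp add: fib_def)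
    then have ne: "fib x \<noteq> {}" by blast
    have "pY (gmap V g x) = (\<Sum>x'\<in>fib x. pX x')"
      by (simp add: pY_def pushforward_def fib_def)
    also have "\<dots> > 0"
      by (rule sum_pos[OF finfib ne]) (use pos' fib_def in auto)
    finally show ?thesis .
  qed
  have Uval: "U C (restrict (gmap V g x) C) =
      (if C \<in> C' ` V then \<Prod>j\<in>{j\<in>V. C' j = C}. real (cnt j (g j (x j))) else 1) * \<psi> C (restrict x C)"
    if x: "x \<in> PiE V X" and C: "C \<in> cl" for x C
  proof -
    have CV: "C \<subseteq> V" using C cliques_sub cl_def by blast
    have VC: "{j\<in>V. C' j = C} \<subseteq> C" using C'in by auto
    have r: "restrict (gmap V g x) C j = g j (x j)" if "j \<in> C" for j
      using that CV by (auto simp: gmap_def)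
    have p1: "(\<Prod>j\<in>{j\<in>V. C' j = C}. real (cnt j (restrict (gmap V g x) C j)))
        = (\<Prod>j\<in>{j\<in>V. C' j = C}. real (cnt j (g j (x j))))"
      by (rule prod.cong[OF refl]) (use r VC in auto)
    define x2 where "x2 = (\<lambda>j\<in>V. if j \<in> C then sel j (g j (x j)) else x j)"
    have x2: "x2 \<in> PiE V X" using x sel unfolding x2_def by (auto simp: PiE_iff)
    have gx2: "gmap V g x2 = gmap V g x" unfolding gmap_eq_iff x2_def using x sel by (auto simp: PiE_iff)
    have rx2: "restrict x2 C = (\<lambda>j\<in>C. sel j (restrict (gmap V g x) C j))"
      using CV r unfolding x2_def by (auto simp: restrict_def fun_eq_iff)
    have "\<psi> C (restrict x2 C) = \<psi> C (restrict x C)"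
      by (rule inv'[OF C x2 x gx2])
    then show ?thesis unfolding U_def p1 rx2[symmetric] by simp
  qed
  have prodU: "(\<Prod>C\<in>cl. U C (restrict (gmap V g x) C)) = real (card (fib x)) * w x"
    if x: "x \<in> PiE V X" for x
  proof -
    have img: "C' ` V \<subseteq> cl" using C'cl by auto
    have "(\<Prod>C\<in>cl. U C (restrict (gmap V g x) C))
       = (\<Prod>C\<in>cl. (if C \<in> C' ` V then \<Prod>j\<in>{j\<in>V. C' j = C}. real (cnt j (g j (x j))) else 1))
         * (\<Prod>C\<in>cl. \<psi> C (restrict x C))"
      by (simp add: Uval[OF x] prod.distrib)
    also have "(\<Prod>C\<in>cl. (if C \<in> C' ` V then \<Prod>j\<in>{j\<in>V. C' j = C}. real (cnt j (g j (x j))) else 1))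
        = (\<Prod>C\<in>C' ` V. \<Prod>j\<in>{j\<in>V. C' j = C}. real (cnt j (g j (x j))))"
      by (subst prod.If_cases[OF fincl]) (simp add: Int_absorb1[OF img])
    also have "\<dots> = (\<Prod>j\<in>V. real (cnt j (g j (x j))))"
      using prod.group[OF finV finite_imageI[OF finV], where g=C' and h="\<lambda>j. real (cnt j (g j (x j)))"]
      by simp
    also have "\<dots> = real (card (fib x))" by (simp add: card_fib)
    moreover have wx: "w x = (\<Prod>C\<in>cl. \<psi> C (restrict x C))" unfolding w_def gibbs_weight_def cl_def by (rule refl)
    ultimately show ?thesis by (simp add: restrict_def)
  qed
  have U_ok: "\<forall>x\<in>PiE V X.
              pY (gmap V g x) = (\<Prod>C\<in>cl. U C (restrict (gmap V g x) C)) / Z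
            \<and> (\<forall>C\<in>C' ` V.
                 U C (restrict (gmap V g x) C)
                   = real (card {z\<in>PiE {j\<in>V. C' j = C} X.
                                  \<forall>j\<in>{j\<in>V. C' j = C}. g j (z j) = g j (x j)})
                     * \<psi> C (restrict x C))
            \<and> (\<forall>C\<in>cl - C' ` V. U C (restrict (gmap V g x) C) = \<psi> C (restrict x C))"
  proof (intro ballI conjI)
    fix x assume x: "x \<in> PiE V X"
    show "pY (gmap V g x) = (\<Prod>C\<in>cl. U C (restrict (gmap V g x) C)) / Z"
      using pY_x[OF x] prodU[OF x] by simp
    fix C assume C: "C \<in> C' ` V"
    have Ccl: "C \<in> cl" using C C'cl by auto
    have "card {z\<in>PiE {j\<in>V. C' j = C} X. \<forall>j\<in>{j\<in>V. C' j = C}. g j (z j) = g j (x j)}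
        = (\<Prod>j\<in>{j\<in>V. C' j = C}. cnt j (g j (x j)))"
    proof -
      have "{z\<in>PiE {j\<in>V. C' j = C} X. \<forall>j\<in>{j\<in>V. C' j = C}. g j (z j) = g j (x j)}
          = PiE {j\<in>V. C' j = C} (\<lambda>j. {a\<in>X j. g j a = g j (x j)})" by (rule PiE_filter)
      moreover have "finite {j\<in>V. C' j = C}" using finV by simp
      ultimately show ?thesis unfolding cnt_def by (simp add: card_PiE)
    qed
    then show "U C (restrict (gmap V g x) C)
                   = real (card {z\<in>PiE {j\<in>V. C' j = C} X.
                                  \<forall>j\<in>{j\<in>V. C' j = C}. g j (z j) = g j (x j)})
                     * \<psi> C (restrict x C)"
      using Uval[OF x Ccl] C by simp
  next
    fix x C assume x: "x \<in> PiE V X" and C: "C \<in> cl - C' ` V"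
    then show "U C (restrict (gmap V g x) C) = \<psi> C (restrict x C)"
      using Uval[OF x] by simp
  qed
  have surjg: "\<exists>x\<in>PiE V X. gmap V g x = y" if y: "y \<in> PiE V Yg" for y
  proof (intro bexI)
    define x where "x = (\<lambda>j\<in>V. sel j (y j))"
    have yj: "\<forall>j\<in>V. \<exists>a\<in>X j. y j = g j a" using y by (auto simp: Yg_def PiE_iff)
    show "x \<in> PiE V X" unfolding x_def using yj sel by (auto simp: PiE_iff)
    have "gmap V g x j = y j" for j
    proof (cases "j \<in> V")
      case True then show ?thesis unfolding x_def gmap_def using yj sel by auto
    next
      case False then show ?thesis unfolding gmap_def using y PiE_arb by (metis restrict_apply)
    qed
    then show "gmap V g x = y" by blast
  qed
  have markov: "markov_rf V E Yg pY"
    unfolding markov_rf_def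
  proof (intro ballI impI)
    fix i y assume iV: "i \<in> V" and yS: "y \<in> PiE V Yg"
    define Nb where "Nb = nbrs V E i"
    define a where "a = (\<lambda>y. \<Prod>C\<in>{C\<in>cl. i \<in> C}. U C (restrict y C))"
    define b where "b = (\<lambda>y. (\<Prod>C\<in>{C\<in>cl. i \<notin> C}. U C (restrict y C)) / Z)"
    have NV: "Nb \<subseteq> V - {i}" using irrefl by (auto simp: Nb_def nbrs_def)
    have "cond_prob pY (PiE V Yg) i (V - {i}) y = cond_prob pY (PiE V Yg) i Nb y"
    proof (rule markov_local[OF refl finV _ iV NV, of Yg pY a b])
      show "\<forall>j\<in>V. finite (Yg j)" using finX by (simp add: Yg_def)
      show "y \<in> PiE V Yg" by fact
      show "\<forall>y\<in>PiE V Yg. pY y = a y * b y"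
      proof
        fix y assume "y \<in> PiE V Yg"
        then obtain x where x: "x \<in> PiE V X" and gx: "gmap V g x = y" using surjg by blast
        have split: "cl = {C\<in>cl. i \<in> C} \<union> {C\<in>cl. i \<notin> C}" by blast
        have "(\<Prod>C\<in>cl. U C (restrict y C)) = a y * (\<Prod>C\<in>{C\<in>cl. i \<notin> C}. U C (restrict y C))"
          unfolding a_def by (subst split, rule prod.union_disjoint) (use fincl in auto)
        moreover have "pY y = (\<Prod>C\<in>cl. U C (restrict y C)) / Z"
          using pY_x[OF x] prodU[OF x] gx by simp
        ultimately show "pY y = a y * b y" unfolding b_def by simp
      qed
      show "\<forall>y\<in>PiE V Yg. pY y > 0" using surjg pY_pos by blast
      show "\<forall>y\<in>PiE V Yg. \<forall>y'\<in>PiE V Yg. (\<forall>j\<in>insert i Nb. y j = y' j) \<longrightarrow> a y = a y'"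
      proof (intro ballI impI)
        fix y y' :: "nat \<Rightarrow> 'b" assume h: "\<forall>j\<in>insert i Nb. y j = y' j"
        show "a y = a y'" unfolding a_def
        proof (rule prod.cong[OF refl])
          fix C assume C: "C \<in> {C\<in>cl. i \<in> C}"
          have "C \<subseteq> insert i Nb"
            using C by (auto simp: cl_def cliques_def is_clique_def Nb_def nbrs_def)
          then show "U C (restrict y C) = U C (restrict y' C)"
            using h by (metis (no_types, lifting) restrict_eq_iff subsetD)
        qed
      qed
      show "\<forall>y\<in>PiE V Yg. \<forall>y'\<in>PiE V Yg. (\<forall>j\<in>V - {i}. y j = y' j) \<longrightarrow> b y = b y'"
      proof (intro ballI impI)
        fix y y' :: "nat \<Rightarrow> 'b" assume h: "\<forall>j\<in>V - {i}. y j = y' j"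
        have "(\<Prod>C\<in>{C\<in>cl. i \<notin> C}. U C (restrict y C)) = (\<Prod>C\<in>{C\<in>cl. i \<notin> C}. U C (restrict y' C))"
        proof (rule prod.cong[OF refl])
          fix C assume C: "C \<in> {C\<in>cl. i \<notin> C}"
          have "C \<subseteq> V - {i}" using C cliques_sub cl_def by blast
          then show "U C (restrict y C) = U C (restrict y' C)"
            using h by (metis (no_types, lifting) restrict_eq_iff subsetD)
        qed
        then show "b y = b y'" unfolding b_def by simp
      qed
    qed
    then show "cond_prob pY (PiE V Yg) i (V - {i}) y = cond_prob pY (PiE V Yg) i (nbrs V E i) y"
      by (simp add: Nb_def)
  qed
  show ?thesis
    using markov U_ok
    unfolding V_def Yg_def pY_def pX_def cl_def Z_def by blast
qed

end
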